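(* Let $q$ be a prime power, let $m$ be a divisor of $n$ and set $s=n/m$. Let $\mathcal{F}$ be a flag of type $(ms_1,\ldots,ms_r)$ on $\mathbb{F}_{q^n}$ (with $1\le s_1<\cdots<s_r<s$) whose best friend is the subfield $\mathbb{F}_{q^m}$, and let $\beta\in\mathbb{F}_{q^n}^*$. Then $d_f(\mathrm{Orb}_\beta(\mathcal{F}))=0$ if and only if $\beta\in\mathbb{F}_{q^m}^*$. If $\beta\notin\mathbb{F}_{q^m}^*$, then $2m$ divides $d_f(\mathrm{Orb}_\beta(\mathcal{F}))$ and $$2m\le d_f(\mathrm{Orb}_\beta(\mathcal{F}))\le 2m\left(\sum_{s_i\le\lfloor s/2\rfloor}s_i+\sum_{s_i>\lfloor s/2\rfloor}(s-s_i)\right).$$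
   Context: A flag of type $(t_1,\ldots,t_r)$ on $\mathbb{F}_{q^n}$ is a sequence $(\mathcal{F}_1,\ldots,\mathcal{F}_r)$ of $\mathbb{F}_q$-subspaces with $\{0\}\subsetneq\mathcal{F}_1\subsetneq\cdots\subsetneq\mathcal{F}_r\subsetneq\mathbb{F}_{q^n}$ and $\dim_{\mathbb{F}_q}\mathcal{F}_i=t_i$. For $\beta\in\mathbb{F}_{q^n}^*$ of multiplicative order $|\beta|$, $\mathcal{F}\beta=(\mathcal{F}_1\beta,\ldots,\mathcal{F}_r\beta)$ with $\mathcal{U}\beta=\{u\beta:u\in\mathcal{U}\}$, and $\mathrm{Orb}_\beta(\mathcal{F})=\{\mathcal{F}\beta^j:0\le j\le|\beta|-1\}$. Subspace distance: $d_S(\mathcal{U},\mathcal{V})=\dim(\mathcal{U}+\mathcal{V})-\dim(\mathcal{U}\cap\mathcal{V})$; flag distance: $d_f(\mathcal{F},\mathcal{F}')=\sum_{i=1}^r d_S(\mathcal{F}_i,\mathcal{F}'_i)$. The minimum distance $d_f(\mathcal{C})$ of a set $\mathcal{C}$ of flags is the minimum of $d_f$ over pairs of distinct elements, and $d_f(\mathcal{C})=0$ if $|\mathcal{C}|=1$. A subfield $\mathbb{F}_{q^m}$ is a friend of $\mathcal{F}$ if every $\mathcal{F}_i$ is an $\mathbb{F}_{q^m}$-vector space; the best friend is the largest friend. *)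

theory Defs
  imports Main "HOL-Computational_Algebra.Primes"
begin

text \<open>The ambient field F_{q^n} is a finite field type 'a with CARD('a) = q^n.
  For a divisor d of n, the subfield F_{q^d} is the set of roots of x^(q^d) - x.\<close>

definition subfield_of :: "nat \<Rightarrow> nat \<Rightarrow> 'a::field set" where
  "subfield_of q d = {x. x ^ (q ^ d) = x}"

definition prime_power :: "nat \<Rightarrow> bool" where
  "prime_power q \<longleftrightarrow> (\<exists>p k. prime p \<and> k > 0 \<and> q = p ^ k)"

definition is_subspace :: "'a::field set \<Rightarrow> 'a set \<Rightarrow> bool" where
  "is_subspace K U \<longleftrightarrow> 0 \<in> U \<and> (\<forall>u\<in>U. \<forall>v\<in>U. u + v \<in> U) \<and> (\<forall>k\<in>K. \<forall>u\<in>U. k * u \<in> U)"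

definition span_over :: "'a::field set \<Rightarrow> 'a set \<Rightarrow> 'a set" where
  "span_over K S = {y. \<exists>c. (\<forall>v\<in>S. c v \<in> K) \<and> y = (\<Sum>v\<in>S. c v * v)}"

definition lin_indep_over :: "'a::field set \<Rightarrow> 'a set \<Rightarrow> bool" where
  "lin_indep_over K S \<longleftrightarrow> finite S \<and>
     (\<forall>c. (\<forall>v\<in>S. c v \<in> K) \<longrightarrow> (\<Sum>v\<in>S. c v * v) = 0 \<longrightarrow> (\<forall>v\<in>S. c v = 0))"

definition is_basis_over :: "'a::field set \<Rightarrow> 'a set \<Rightarrow> 'a set \<Rightarrow> bool" where
  "is_basis_over K U B \<longleftrightarrow> B \<subseteq> U \<and> finite B \<and> lin_indep_over K B \<and> span_over K B = U"

definition dim_over :: "'a::field set \<Rightarrow> 'a set \<Rightarrow> nat" where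
  "dim_over K U = card (SOME B. is_basis_over K U B)"

definition set_plus :: "'a::field set \<Rightarrow> 'a set \<Rightarrow> 'a set" where
  "set_plus U V = {u + v | u v. u \<in> U \<and> v \<in> V}"

definition subspace_dist :: "nat \<Rightarrow> 'a::field set \<Rightarrow> 'a set \<Rightarrow> nat" where
  "subspace_dist q U V =
     dim_over (subfield_of q 1) (set_plus U V) - dim_over (subfield_of q 1) (U \<inter> V)"

definition is_flag :: "nat \<Rightarrow> nat list \<Rightarrow> 'a::field set list \<Rightarrow> bool" where
  "is_flag q t F \<longleftrightarrow> length F = length t \<and>
     (\<forall>i < length F. is_subspace (subfield_of q 1) (F ! i)
                    \<and> dim_over (subfield_of q 1) (F ! i) = t ! i) \<and>
     (length F > 0 \<longrightarrow> {0} \<subset> F ! 0 \<and> F ! (length F - 1) \<subset> UNIV) \<and>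
     (\<forall>i. Suc i < length F \<longrightarrow> F ! i \<subset> F ! Suc i)"

definition flag_dist :: "nat \<Rightarrow> 'a::field set list \<Rightarrow> 'a set list \<Rightarrow> nat" where
  "flag_dist q F G = (\<Sum>i < length F. subspace_dist q (F ! i) (G ! i))"

definition min_flag_dist :: "nat \<Rightarrow> 'a::field set list set \<Rightarrow> nat" where
  "min_flag_dist q C =
     (if \<exists>a\<in>C. \<exists>b\<in>C. a \<noteq> b
      then Min {flag_dist q a b | a b. a \<in> C \<and> b \<in> C \<and> a \<noteq> b} else 0)"

definition is_friend :: "nat \<Rightarrow> nat \<Rightarrow> nat \<Rightarrow> 'a::field set list \<Rightarrow> bool" where
  "is_friend q n d F \<longleftrightarrow> d dvd n \<and> (\<forall>i < length F. is_subspace (subfield_of q d) (F ! i))"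

definition is_best_friend :: "nat \<Rightarrow> nat \<Rightarrow> nat \<Rightarrow> 'a::field set list \<Rightarrow> bool" where
  "is_best_friend q n m F \<longleftrightarrow> is_friend q n m F \<and> (\<forall>d. is_friend q n d F \<longrightarrow> d \<le> m)"

definition mult_order :: "'a::field \<Rightarrow> nat" where
  "mult_order b = (LEAST k. k > 0 \<and> b ^ k = 1)"

definition orbit :: "'a::field \<Rightarrow> 'a set list \<Rightarrow> 'a set list set" where
  "orbit b F = {map (\<lambda>U. (\<lambda>u. u * b ^ j) ` U) F | j. j \<le> mult_order b - 1}"

end

theory Submission
  imports Defs "HOL-Computational_Algebra.Polynomial" "HOL-Library.FuncSet"
begin

definition sf :: "'a::field set \<Rightarrow> bool" where
  "sf K \<longleftrightarrow> 0 \<in> K \<and> 1 \<in> K \<and> (\<forall>x\<in>K. \<forall>y\<in>K. x + y \<in> K \<and> x * y \<in> K)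
     \<and> (\<forall>x\<in>K. - x \<in> K) \<and> (\<forall>x\<in>K. x \<noteq> 0 \<longrightarrow> inverse x \<in> K)"

lemma sum_in_subspace:
  assumes "is_subspace K U" "finite S" "S \<subseteq> U" "\<forall>v\<in>S. c v \<in> K"
  shows "(\<Sum>v\<in>S. c v * v) \<in> U"
  using assms(2-4)
proof (induction S rule: finite_induct)
  case empty then show ?case using assms(1) by (simp add: is_subspace_def)
next
  case (insert x F)
  then show ?case using assms(1) by (simp add: is_subspace_def)
qed

lemma in_own_span:
  assumes "sf K" "finite B" "v \<in> B"
  shows "v \<in> span_over K B"
proof -
  let ?c = "\<lambda>u. if u = v then (1::'a) else 0"
  have "(\<Sum>u\<in>B. ?c u * u) = v"
  proof -
    have "(\<Sum>u\<in>B. ?c u * u) = (\<Sum>u\<in>B. if u = v then u else 0)" by (rule sum.cong) auto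
    also have "\<dots> = v" using assms(2,3) by (simp add: sum.delta')
    finally show ?thesis .
  qed
  moreover have "\<forall>u\<in>B. ?c u \<in> K" using assms(1) by (simp add: sf_def)
  ultimately show ?thesis unfolding span_over_def
    by (intro CollectI exI[of _ ?c]) auto
qed

lemma indep_insert:
  assumes K: "sf K" and ind: "lin_indep_over K B" and w: "w \<notin> span_over K B"
  shows "lin_indep_over K (insert w B)"
proof -
  have fin: "finite B" using ind by (simp add: lin_indep_over_def)
  have wB: "w \<notin> B" using in_own_span[OF K fin] w by blast
  show ?thesis unfolding lin_indep_over_def
  proof (intro conjI allI impI)
    show "finite (insert w B)" using fin by simp
    fix c assume cK: "\<forall>v\<in>insert w B. c v \<in> K" and s0: "(\<Sum>v\<in>insert w B. c v * v) = 0"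
    have s1: "c w * w + (\<Sum>v\<in>B. c v * v) = 0" using s0 fin wB by simp
    have cw: "c w = 0"
    proof (rule ccontr)
      assume nz: "c w \<noteq> 0"
      let ?d = "\<lambda>v. - (inverse (c w)) * c v"
      have "w = inverse (c w) * (c w * w)" using nz by simp
      also have "c w * w = - (\<Sum>v\<in>B. c v * v)" using s1 by (simp add: eq_neg_iff_add_eq_0)
      finally have "w = (\<Sum>v\<in>B. ?d v * v)"
        by (simp add: sum_distrib_left mult.assoc sum_negf)
      moreover have "\<forall>v\<in>B. ?d v \<in> K"
        using K cK nz by (simp add: sf_def)
      ultimately have "w \<in> span_over K B" unfolding span_over_def
        by (intro CollectI exI[of _ ?d]) auto
      then show False using w by blast
    qed
    then have "(\<Sum>v\<in>B. c v * v) = 0" using s1 by simp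
    then have "\<forall>v\<in>B. c v = 0" using ind cK unfolding lin_indep_over_def by blast
    then show "\<forall>v\<in>insert w B. c v = 0" using cw by simp
  qed
qed

lemma basis_exists:
  assumes K: "sf K" and U: "is_subspace K U" "finite U"
  shows "\<exists>B. is_basis_over K U B"
proof -
  define I where "I = {B. B \<subseteq> U \<and> lin_indep_over K B}"
  have finI: "finite I" unfolding I_def using U(2) by (simp add: finite_subset)
  have "{} \<in> I" unfolding I_def lin_indep_over_def by simp
  then have ne: "card ` I \<noteq> {}" by blast
  obtain B where BI: "B \<in> I" and Bc: "card B = Max (card ` I)"
    using Max_in[OF finite_imageI[OF finI] ne] by auto
  have maxB: "card C \<le> card B" if "C \<in> I" for C
    using Bc that finI by simp
  have BU: "B \<subseteq> U" and ind: "lin_indep_over K B" using BI by (auto simp: I_def)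
  have fin: "finite B" using ind by (simp add: lin_indep_over_def)
  have "span_over K B = U"
  proof
    show "span_over K B \<subseteq> U"
      unfolding span_over_def using sum_in_subspace[OF U(1) fin BU] by blast
    show "U \<subseteq> span_over K B"
    proof
      fix w assume wU: "w \<in> U"
      show "w \<in> span_over K B"
      proof (rule ccontr)
        assume nw: "w \<notin> span_over K B"
        then have "insert w B \<in> I" using indep_insert[OF K ind nw] wU BU by (simp add: I_def)
        moreover have "w \<notin> B" using nw in_own_span[OF K fin] by blast
        ultimately show False using maxB[of "insert w B"] fin by simp
      qed
    qed
  qed
  then show ?thesis using BU fin ind unfolding is_basis_over_def by blast
qed

lemma indep_zero:
  assumes "lin_indep_over K B" "\<forall>v\<in>B. d v \<in> K" "(\<Sum>v\<in>B. d v * v) = 0" "v \<in> B"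
  shows "d v = 0"
  using assms unfolding lin_indep_over_def by blast

lemma basis_card:
  assumes K: "sf K" and B: "is_basis_over K U B"
  shows "card U = card K ^ card B"
proof -
  have fin: "finite B" and ind: "lin_indep_over K B" and sp: "span_over K B = U"
    using B by (auto simp: is_basis_over_def)
  let ?f = "\<lambda>c. \<Sum>v\<in>B. c v * v"
  have "bij_betw ?f (B \<rightarrow>\<^sub>E K) U"
    unfolding bij_betw_def
  proof
    show "inj_on ?f (B \<rightarrow>\<^sub>E K)"
    proof (rule inj_onI)
      fix c c' assume c: "c \<in> B \<rightarrow>\<^sub>E K" and c': "c' \<in> B \<rightarrow>\<^sub>E K" and e: "?f c = ?f c'"
      have "(\<Sum>v\<in>B. (c v - c' v) * v) = 0"
        using e by (simp add: left_diff_distrib sum_subtractf)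
      moreover have "\<forall>v\<in>B. c v - c' v \<in> K"
      proof
        fix v assume "v \<in> B"
        then have "c v \<in> K" "c' v \<in> K" using c c' by auto
        then have "c v + - c' v \<in> K" using K unfolding sf_def by blast
        then show "c v - c' v \<in> K" by simp
      qed
      ultimately have "\<forall>v\<in>B. c v - c' v = 0"
        using indep_zero[OF ind, of "\<lambda>v. c v - c' v"] by blast
      have "c \<in> extensional B" "c' \<in> extensional B" using c c' by (simp_all add: PiE_iff)
      then show "c = c'" using \<open>\<forall>v\<in>B. c v - c' v = 0\<close> by (intro extensionalityI[of c B c']) auto
    qed
    show "?f ` (B \<rightarrow>\<^sub>E K) = U"
    proof
      show "?f ` (B \<rightarrow>\<^sub>E K) \<subseteq> U"
      proof
        fix y assume "y \<in> ?f ` (B \<rightarrow>\<^sub>E K)"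
        then obtain c where c: "c \<in> B \<rightarrow>\<^sub>E K" and y: "y = ?f c" by blast
        have "\<forall>v\<in>B. c v \<in> K" using c by blast
        then have "y \<in> span_over K B" unfolding span_over_def using y by blast
        then show "y \<in> U" using sp by simp
      qed
      show "U \<subseteq> ?f ` (B \<rightarrow>\<^sub>E K)"
      proof
        fix y assume "y \<in> U"
        then obtain c where cK: "\<forall>v\<in>B. c v \<in> K" and y: "y = ?f c"
          using sp unfolding span_over_def by blast
        have "restrict c B \<in> B \<rightarrow>\<^sub>E K" using cK by auto
        moreover have "?f (restrict c B) = y" using y by simp
        ultimately show "y \<in> ?f ` (B \<rightarrow>\<^sub>E K)" by blast
      qed
    qed
  qed
  then have "card U = card (B \<rightarrow>\<^sub>E K)" by (simp add: bij_betw_same_card)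
  also have "\<dots> = card K ^ card B" using fin by (simp add: card_PiE)
  finally show ?thesis .
qed

lemma dim_card:
  assumes K: "sf K" and U: "is_subspace K U" "finite U"
  shows "card U = card K ^ dim_over K U"
proof -
  have "is_basis_over K U (SOME B. is_basis_over K U B)"
    using basis_exists[OF assms] by (rule someI_ex)
  then show ?thesis unfolding dim_over_def by (rule basis_card[OF K])
qed

lemma card_times_zero:
  fixes x :: "'a::{finite,field}"
  shows "of_nat (card (UNIV::'a set)) * x = 0"
proof -
  have "(\<Sum>y\<in>UNIV. y + x) = (\<Sum>y\<in>UNIV. (y::'a))"
  proof -
    have "inj (\<lambda>y. y + x)" by (auto simp: inj_def)
    moreover have "range (\<lambda>y. y + x) = UNIV"
    proof (rule set_eqI)
      fix z show "z \<in> range (\<lambda>y. y + x) \<longleftrightarrow> z \<in> UNIV"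
        by (simp add: image_iff)
    qed
    ultimately show ?thesis
      using sum.reindex[of "\<lambda>y. y + x" UNIV id] by simp
  qed
  then show ?thesis by (simp add: sum.distrib)
qed

lemma char_p:
  fixes dummy :: "'a::{finite,field}"
  assumes "prime p" "card (UNIV::'a set) = p ^ k" 
  shows "(of_nat p :: 'a) = 0"
proof -
  have "(of_nat (p ^ k) :: 'a) = 0" using card_times_zero[of "1::'a"] assms by simp
  then have "(of_nat p :: 'a) ^ k = 0" by simp
  then show ?thesis by simp
qed

lemma frob_p:
  fixes x y :: "'a::field"
  assumes "prime p" "(of_nat p :: 'a) = 0"
  shows "(x + y) ^ p = x ^ p + y ^ p"
proof -
  have p0: "p > 0" using assms prime_gt_0_nat by blast
  have "(x + y) ^ p = (\<Sum>k\<le>p. of_nat (p choose k) * x ^ k * y ^ (p - k))"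
    by (rule binomial_ring)
  also have "\<dots> = (\<Sum>k\<in>{0,p}. of_nat (p choose k) * x ^ k * y ^ (p - k))"
  proof (rule sum.mono_neutral_right)
    show "\<forall>i\<in>{..p} - {0, p}. of_nat (p choose i) * x ^ i * y ^ (p - i) = 0"
    proof
      fix i assume i: "i \<in> {..p} - {0, p}"
      then have "p dvd (p choose i)" using assms(1) p0 by (intro dvd_choose_prime) auto
      then obtain t where "p choose i = p * t" by blast
      then show "of_nat (p choose i) * x ^ i * y ^ (p - i) = 0" using assms(2) by simp
    qed
  qed auto
  also have "\<dots> = x ^ p + y ^ p" using p0 by (simp add: add.commute)
  finally show ?thesis .
qed

lemma frob_pow:
  fixes x y :: "'a::field"
  assumes "prime p" "(of_nat p :: 'a) = 0"
  shows "(x + y) ^ (p ^ j) = x ^ (p ^ j) + y ^ (p ^ j)"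
proof (induction j)
  case (Suc j)
  have "(x + y) ^ (p ^ Suc j) = ((x + y) ^ (p ^ j)) ^ p"
    by (simp add: power_mult[symmetric] mult.commute)
  also have "\<dots> = (x ^ (p ^ j)) ^ p + (y ^ (p ^ j)) ^ p" using Suc frob_p[OF assms] by simp
  also have "\<dots> = x ^ (p ^ Suc j) + y ^ (p ^ Suc j)"
    by (simp add: power_mult[symmetric] mult.commute)
  finally show ?case .
qed simp

lemma neg_closed_finite:
  fixes A :: "'a::ab_group_add set"
  assumes "finite A" "0 \<in> A" "\<forall>x\<in>A. \<forall>y\<in>A. x + y \<in> A" "x \<in> A"
  shows "- x \<in> A"
proof -
  have "(\<lambda>u. u + x) ` A = A"
    by (rule endo_inj_surj) (use assms in \<open>auto simp: inj_on_def\<close>)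
  then have "0 \<in> (\<lambda>u. u + x) ` A" using assms(2) by simp
  then obtain u where "u \<in> A" "u + x = 0" by auto
  then have "u = - x" by (simp add: eq_neg_iff_add_eq_0)
  then show ?thesis using \<open>u \<in> A\<close> by simp
qed

lemma subspace_neg:
  assumes "sf K" "is_subspace K U" "u \<in> U"
  shows "- u \<in> U"
proof -
  have "- 1 \<in> K" using assms(1) by (simp add: sf_def)
  then have "(- 1) * u \<in> U" using assms(2,3) unfolding is_subspace_def by blast
  then show ?thesis by simp
qed

lemma subspace_plus:
  assumes "is_subspace K U" "is_subspace K V"
  shows "is_subspace K (set_plus U V)"
  unfolding is_subspace_def set_plus_def
proof (intro conjI ballI)
  show "0 \<in> {u + v |u v. u \<in> U \<and> v \<in> V}"
    using assms by (auto simp: is_subspace_def intro!: exI[of _ 0])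
next
  fix x y assume "x \<in> {u + v |u v. u \<in> U \<and> v \<in> V}" "y \<in> {u + v |u v. u \<in> U \<and> v \<in> V}"
  then obtain u v u' v' where "u \<in> U" "v \<in> V" "u' \<in> U" "v' \<in> V" "x = u + v" "y = u' + v'" by blast
  moreover have "u + v + (u' + v') = (u + u') + (v + v')" by (simp add: algebra_simps)
  ultimately show "x + y \<in> {u + v |u v. u \<in> U \<and> v \<in> V}"
    using assms unfolding is_subspace_def by blast
next
  fix k x assume "k \<in> K" "x \<in> {u + v |u v. u \<in> U \<and> v \<in> V}"
  then obtain u v where "u \<in> U" "v \<in> V" "x = u + v" by blast
  moreover have "k * (u + v) = k * u + k * v" by (simp add: algebra_simps)
  ultimately show "k * x \<in> {u + v |u v. u \<in> U \<and> v \<in> V}"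
    using assms \<open>k \<in> K\<close> unfolding is_subspace_def by blast
qed

lemma subspace_inter:
  assumes "is_subspace K U" "is_subspace K V"
  shows "is_subspace K (U \<inter> V)"
  using assms unfolding is_subspace_def by blast

lemma card_plus_inter:
  fixes U V :: "'a::{finite,field} set"
  assumes K: "sf K" and U: "is_subspace K U" and V: "is_subspace K V"
  shows "card (set_plus U V) * card (U \<inter> V) = card U * card V"
proof -
  define r where "r w = (SOME p. p \<in> U \<times> V \<and> fst p + snd p = w)" for w
  have r: "r w \<in> U \<times> V \<and> fst (r w) + snd (r w) = w" if "w \<in> set_plus U V" for w
  proof -
    from that obtain u v where "u \<in> U" "v \<in> V" "w = u + v" unfolding set_plus_def by blast
    then have "\<exists>p. p \<in> U \<times> V \<and> fst p + snd p = w" by (intro exI[of _ "(u, v)"]) auto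
    then show ?thesis unfolding r_def by (rule someI_ex)
  qed
  define g where "g wt = (fst (r (fst wt)) + snd wt, snd (r (fst wt)) - snd wt)" for wt
  have Uadd: "\<And>x y. x \<in> U \<Longrightarrow> y \<in> U \<Longrightarrow> x + y \<in> U" using U by (simp add: is_subspace_def)
  have Vadd: "\<And>x y. x \<in> V \<Longrightarrow> y \<in> V \<Longrightarrow> x + y \<in> V" using V by (simp add: is_subspace_def)
  have Uneg: "\<And>x. x \<in> U \<Longrightarrow> - x \<in> U" using subspace_neg[OF K U] by blast
  have Vneg: "\<And>x. x \<in> V \<Longrightarrow> - x \<in> V" using subspace_neg[OF K V] by blast
  have Usub: "\<And>x y. x \<in> U \<Longrightarrow> y \<in> U \<Longrightarrow> x - y \<in> U" using Uadd Uneg by (metis diff_conv_add_uminus)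
  have Vsub: "\<And>x y. x \<in> V \<Longrightarrow> y \<in> V \<Longrightarrow> x - y \<in> V" using Vadd Vneg by (metis diff_conv_add_uminus)
  have "bij_betw g (set_plus U V \<times> (U \<inter> V)) (U \<times> V)"
    unfolding bij_betw_def
  proof (intro conjI)
    show "inj_on g (set_plus U V \<times> (U \<inter> V))"
    proof (rule inj_onI)
      fix a b assume a: "a \<in> set_plus U V \<times> (U \<inter> V)" and b: "b \<in> set_plus U V \<times> (U \<inter> V)"
        and e: "g a = g b"
      obtain w t where a': "a = (w, t)" by (cases a)
      obtain w' t' where b': "b = (w', t')" by (cases b)
      have e1: "fst (r w) + t = fst (r w') + t'" and e2: "snd (r w) - t = snd (r w') - t'"
        using e by (simp_all add: g_def a' b')
      have "fst (r w) + t + (snd (r w) - t) = fst (r w') + t' + (snd (r w') - t')"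
        using e1 e2 by simp
      then have "fst (r w) + snd (r w) = fst (r w') + snd (r w')" by (simp add: algebra_simps)
      then have "w = w'" using r a b a' b' by auto
      then show "a = b" using e1 a' b' by simp
    qed
    show "g ` (set_plus U V \<times> (U \<inter> V)) = U \<times> V"
    proof
      show "g ` (set_plus U V \<times> (U \<inter> V)) \<subseteq> U \<times> V"
      proof
        fix y assume "y \<in> g ` (set_plus U V \<times> (U \<inter> V))"
        then obtain w t where w: "w \<in> set_plus U V" and t: "t \<in> U \<inter> V" and y: "y = g (w, t)" by auto
        have "fst (r w) \<in> U" "snd (r w) \<in> V" using r[OF w] by auto
        then show "y \<in> U \<times> V" using t y Uadd Vsub by (simp add: g_def)
      qed
      show "U \<times> V \<subseteq> g ` (set_plus U V \<times> (U \<inter> V))"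
      proof
        fix y assume y: "y \<in> U \<times> V"
        obtain u v where uv: "y = (u, v)" by (cases y)
        have u: "u \<in> U" and v: "v \<in> V" using y uv by auto
        define w where "w = u + v"
        have w: "w \<in> set_plus U V" unfolding set_plus_def w_def using u v by blast
        define t where "t = u - fst (r w)"
        have ru: "fst (r w) \<in> U" and rv: "snd (r w) \<in> V" and rs: "fst (r w) + snd (r w) = w"
          using r[OF w] by auto
        have tU: "t \<in> U" unfolding t_def using u ru Usub by blast
        have "t = snd (r w) - v" unfolding t_def using rs w_def by (simp add: algebra_simps)
        then have tV: "t \<in> V" using rv v Vsub by simp
        have "g (w, t) = (u, v)" unfolding g_def t_def using rs w_def by (simp add: algebra_simps)
        then show "y \<in> g ` (set_plus U V \<times> (U \<inter> V))" using w tU tV uv by force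
      qed
    qed
  qed
  then have "card (set_plus U V \<times> (U \<inter> V)) = card (U \<times> V)" by (rule bij_betw_same_card)
  then show ?thesis by (simp add: card_cartesian_product)
qed

lemma units_pow:
  fixes A :: "'a::field set"
  assumes fin: "finite A" and z: "0 \<notin> A" and cl: "\<forall>x\<in>A. \<forall>y\<in>A. x * y \<in> A" and x: "x \<in> A"
  shows "x ^ card A = 1"
proof -
  have x0: "x \<noteq> 0" using x z by auto
  have inj: "inj_on (\<lambda>y. x * y) A" using x0 by (auto simp: inj_on_def)
  have im: "(\<lambda>y. x * y) ` A = A"
    by (rule endo_inj_surj[OF fin _ inj]) (use cl x in auto)
  have "prod id A = prod id ((\<lambda>y. x * y) ` A)" using im by simp
  also have "\<dots> = prod (\<lambda>y. x * y) A" using prod.reindex[OF inj, of id] by simp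
  also have "\<dots> = x ^ card A * prod id A" by (simp add: prod.distrib)
  finally have e: "prod id A = x ^ card A * prod id A" .
  have "prod id A \<noteq> 0" using fin z by (auto simp: prod_zero_iff)
  then show ?thesis using e by simp
qed

lemma all_pow:
  fixes x :: "'a::{finite,field}"
  assumes "x \<noteq> 0"
  shows "x ^ (card (UNIV :: 'a set) - 1) = 1"
proof -
  have "x ^ card (UNIV - {0::'a}) = 1"
    by (rule units_pow) (use assms in auto)
  moreover have "card (UNIV - {0::'a}) = card (UNIV :: 'a set) - 1"
    by (simp add: card_Diff_singleton)
  ultimately show ?thesis by simp
qed

lemma nat_geom:
  fixes Q :: nat
  assumes "Q \<ge> 1"
  shows "Q ^ k - 1 = (Q - 1) * (\<Sum>i<k. Q ^ i)"
proof -
  have "int (Q ^ k - 1) = int Q ^ k - 1" using assms by (simp add: of_nat_diff)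
  also have "\<dots> = (int Q - 1) * (\<Sum>i<k. int Q ^ i)" by (rule power_diff_1_eq)
  also have "\<dots> = int ((Q - 1) * (\<Sum>i<k. Q ^ i))" using assms by (simp add: of_nat_diff)
  finally show ?thesis by linarith
qed

lemma card_roots_pow:
  fixes dummy :: "'a::{finite,field}"
  assumes card: "card (UNIV :: 'a set) = Q ^ k" and Q: "Q \<ge> 2" and k: "k \<ge> 1"
  shows "card {x::'a. x ^ Q = x} = Q"
proof -
  define M where "M = Q - 1"
  define S where "S = (\<Sum>i<k. Q ^ i)"
  define N where "N = Q ^ k - 1"
  have M1: "M \<ge> 1" using Q by (simp add: M_def)
  have NMS: "N = M * S" unfolding N_def M_def S_def using Q by (intro nat_geom) simp
  have S1: "S \<ge> 1"
  proof -
    have "Q ^ 0 \<le> S" unfolding S_def using k by (intro member_le_sum) auto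
    then show ?thesis by simp
  qed
  define h :: "'a poly" where "h = (\<Sum>i<S. monom 1 (M * i))"
  have polyh: "poly h x = (\<Sum>i<S. (x ^ M) ^ i)" for x
    by (simp add: h_def poly_sum poly_monom power_mult)
  define p1 :: "'a poly" where "p1 = monom 1 M - 1"
  have polyp1: "poly p1 x = x ^ M - 1" for x by (simp add: p1_def poly_monom)
  have key: "x ^ M = 1 \<or> poly h x = 0" if "x \<noteq> 0" for x :: 'a
  proof -
    have "x ^ N = 1" using all_pow[OF that] card by (simp add: N_def)
    then have "(x ^ M) ^ S - 1 = 0" using NMS by (simp add: power_mult)
    moreover have "(x ^ M) ^ S - 1 = (x ^ M - 1) * (\<Sum>i<S. (x ^ M) ^ i)" by (rule power_diff_1_eq)
    ultimately have "(x ^ M - 1) * poly h x = 0" by (simp only: polyh)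
    then show ?thesis by simp
  qed
  have p1nz: "p1 \<noteq> 0"
  proof
    assume "p1 = 0"
    then have "poly p1 0 = 0" by simp
    then show False using M1 by (simp add: polyp1 power_0_left)
  qed
  have degp1: "degree p1 \<le> M" unfolding p1_def
    by (intro degree_diff_le) (auto intro: degree_monom_le)
  have hnz: "h \<noteq> 0"
  proof
    assume "h = 0"
    then have "poly h 0 = 0" by simp
    moreover have "poly h 0 = (\<Sum>i<S. (0::'a) ^ i)" using M1 by (simp add: polyh power_0_left)
    moreover have "(\<Sum>i<S. (0::'a) ^ i) = 1"
    proof -
      have "(\<Sum>i<S. (0::'a) ^ i) = (\<Sum>i<S. if i = 0 then 1 else 0)"
        by (rule sum.cong) auto
      also have "\<dots> = 1" using S1 by (simp add: sum.delta)
      finally show ?thesis .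
    qed
    ultimately show False by simp
  qed
  have degh: "degree h \<le> M * (S - 1)" unfolding h_def
  proof (rule degree_sum_le)
    fix i assume "i \<in> {..<S}"
    then have "i \<le> S - 1" by simp
    then have "M * i \<le> M * (S - 1)" by simp
    then show "degree (monom (1::'a) (M * i)) \<le> M * (S - 1)"
      using degree_monom_le[of "1::'a" "M * i"] by linarith
  qed simp
  define R1 where "R1 = {x::'a. poly p1 x = 0}"
  define R2 where "R2 = {x::'a. poly h x = 0}"
  have cR1: "card R1 \<le> M" unfolding R1_def using card_poly_roots_bound[OF p1nz] degp1 by linarith
  have cR2: "card R2 \<le> M * (S - 1)" unfolding R2_def using card_poly_roots_bound[OF hnz] degh by linarith
  have "UNIV - {0} \<subseteq> R1 \<union> R2" using key by (auto simp: R1_def R2_def polyp1)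
  then have "card (UNIV - {0::'a}) \<le> card (R1 \<union> R2)" by (intro card_mono) auto
  also have "\<dots> \<le> card R1 + card R2" by (rule card_Un_le)
  finally have "N \<le> card R1 + card R2" using card by (simp add: card_Diff_singleton N_def)
  then have "M * S \<le> card R1 + M * (S - 1)" using cR2 NMS by linarith
  moreover have "M * S = M * (S - 1) + M" using S1 by (cases S) auto
  ultimately have cR1': "card R1 \<ge> M" by linarith
  have R1eq: "R1 = {x. x ^ M = (1::'a)}" by (simp add: R1_def polyp1)
  have "{x::'a. x ^ Q = x} = insert 0 R1"
  proof (rule set_eqI)
    fix x :: 'a
    have QM: "Q = Suc M" using Q by (simp add: M_def)
    have "x ^ Q = x \<longleftrightarrow> x * x ^ M = x" by (simp add: QM)
    also have "\<dots> \<longleftrightarrow> x = 0 \<or> x ^ M = 1" by (rule mult_cancel_left2)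
    finally show "x \<in> {x. x ^ Q = x} \<longleftrightarrow> x \<in> insert 0 R1" using R1eq by auto
  qed
  moreover have "0 \<notin> R1" using R1eq M1 by (simp add: power_0_left)
  ultimately have "card {x::'a. x ^ Q = x} = Suc (card R1)" by simp
  then show ?thesis using cR1 cR1' Q by (simp add: M_def)
qed

lemma card_subfield:
  fixes dummy :: "'a::{finite,field}"
  assumes card: "card (UNIV :: 'a set) = q ^ n" and q: "q \<ge> 2" and n: "n \<ge> 1" and d: "d dvd n"
  shows "card (subfield_of q d :: 'a set) = q ^ d"
proof -
  obtain k where nk: "n = d * k" using d by blast
  have "k \<ge> 1" using n nk by (cases k) auto
  moreover have "d \<ge> 1" using n nk by (cases d) auto
  then have "q ^ 1 \<le> q ^ d" using q by (intro power_increasing) auto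
  then have "q ^ d \<ge> 2" using q by simp
  moreover have "card (UNIV :: 'a set) = (q ^ d) ^ k" using card nk by (simp add: power_mult)
  ultimately show ?thesis unfolding subfield_of_def by (intro card_roots_pow) auto
qed

lemma sf_subfield:
  fixes dummy :: "'a::{finite,field}"
  assumes p: "prime p" and k: "k > 0" and q: "q = p ^ k" and card: "card (UNIV :: 'a set) = q ^ n"
  shows "sf (subfield_of q d :: 'a set)"
proof -
  have c0: "(of_nat p :: 'a) = 0" using char_p[OF p, of "k * n"] card q by (simp add: power_mult)
  have qd: "q ^ d = p ^ (k * d)" using q by (simp add: power_mult)
  have pos: "q ^ d > 0" using q p prime_gt_0_nat by simp
  have add: "x + y \<in> subfield_of q d" if "x \<in> subfield_of q d" "y \<in> subfield_of q d" for x y :: 'a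
    using that frob_pow[OF p c0, of x y "k * d"] by (simp add: subfield_of_def qd)
  have zero: "(0::'a) \<in> subfield_of q d" using pos by (simp add: subfield_of_def)
  show ?thesis unfolding sf_def
  proof (intro conjI ballI impI)
    show "(0::'a) \<in> subfield_of q d" by (rule zero)
    show "(1::'a) \<in> subfield_of q d" by (simp add: subfield_of_def)
    fix x :: 'a assume x: "x \<in> subfield_of q d"
    show "- x \<in> subfield_of q d"
    proof -
      have fin: "finite (subfield_of q d :: 'a set)" by simp
      have cl: "\<forall>a\<in>subfield_of q d. \<forall>b\<in>subfield_of q d. a + b \<in> (subfield_of q d :: 'a set)"
        using add by blast
      show ?thesis using fin zero cl x by (rule neg_closed_finite)
    qed
    show "x \<noteq> 0 \<Longrightarrow> inverse x \<in> subfield_of q d"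
      using x by (simp add: subfield_of_def power_inverse)
    fix y :: 'a assume y: "y \<in> subfield_of q d"
    show "x + y \<in> subfield_of q d" by (rule add[OF x y])
    show "x * y \<in> subfield_of q d" using x y by (simp add: subfield_of_def power_mult_distrib)
  qed
qed

lemma subfield_mono1:
  fixes x :: "'a::field"
  assumes "x \<in> subfield_of q 1"
  shows "x \<in> subfield_of q m"
proof -
  have "x ^ (q ^ m) = x" for m
  proof (induction m)
    case (Suc m)
    have "x ^ (q ^ Suc m) = (x ^ (q ^ m)) ^ q" by (simp add: power_mult[symmetric] mult.commute)
    then show ?case using Suc assms by (simp add: subfield_of_def)
  qed simp
  then show ?thesis by (simp add: subfield_of_def)
qed

lemma q_ge2: fixes p k q :: nat assumes "prime p" "k > 0" "q = p ^ k" shows "q \<ge> 2"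
proof -
  have "p > 0" using prime_gt_0_nat[OF assms(1)] .
  then have "p ^ 1 \<le> p ^ k" using assms(2) by (intro power_increasing) auto
  then show ?thesis using assms prime_ge_2_nat[OF assms(1)] by simp
qed

lemma stab_in_subfield:
  fixes F :: "'a::{finite,field} set list" and x :: 'a
  assumes p: "prime p" and k: "k > 0" and q: "q = p ^ k"
    and card: "card (UNIV :: 'a set) = q ^ n" and n: "n \<ge> 1" and mn: "m dvd n"
    and bf: "is_best_friend q n m F"
    and x: "\<forall>i<length F. \<forall>u\<in>F ! i. x * u \<in> F ! i"
  shows "x \<in> subfield_of q m"
proof -
  have q2: "q \<ge> 2" by (rule q_ge2[OF p k q])
  define Km where "Km = (subfield_of q m :: 'a set)"
  have sfK: "sf Km" unfolding Km_def by (rule sf_subfield[OF p k q card])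
  have cK: "card Km = q ^ m" unfolding Km_def by (rule card_subfield[OF card q2 n mn])
  have m1: "m \<ge> 1" using mn n by (cases m) auto
  have fr: "\<forall>i<length F. is_subspace Km (F ! i)"
    using bf unfolding is_best_friend_def is_friend_def Km_def by blast
  define T where "T = {y::'a. \<forall>i<length F. \<forall>u\<in>F ! i. y * u \<in> F ! i}"
  have KT: "Km \<subseteq> T" using fr unfolding T_def is_subspace_def by blast
  have Tmul: "a * b \<in> T" if "a \<in> T" "b \<in> T" for a b
    using that unfolding T_def by (simp add: mult.assoc)
  have Tadd: "a + b \<in> T" if ab: "a \<in> T" "b \<in> T" for a b
  proof -
    have "(a + b) * u \<in> F ! i" if i: "i < length F" and u: "u \<in> F ! i" for i u
    proof -
      have "a * u \<in> F ! i" "b * u \<in> F ! i" using ab i u unfolding T_def by auto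
      moreover have "is_subspace Km (F ! i)" using fr i by blast
      ultimately have "a * u + b * u \<in> F ! i" unfolding is_subspace_def by blast
      then show ?thesis by (simp add: distrib_right)
    qed
    then show ?thesis unfolding T_def by blast
  qed
  have T0: "0 \<in> T" using fr unfolding T_def is_subspace_def by simp
  have T1: "1 \<in> T" unfolding T_def by simp
  have Tneg: "- a \<in> T" if "a \<in> T" for a
  proof -
    have "- (a * u) \<in> F ! i" if i: "i < length F" and u: "u \<in> F ! i" for i u
    proof -
      have "a * u \<in> F ! i" using \<open>a \<in> T\<close> i u unfolding T_def by auto
      moreover have "is_subspace Km (F ! i)" using fr i by blast
      ultimately show ?thesis using subspace_neg[OF sfK] by blast
    qed
    then show ?thesis unfolding T_def by simp
  qed
  have Tinv: "inverse a \<in> T" if "a \<in> T" "a \<noteq> 0" for a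
  proof -
    have "inverse a * u \<in> F ! i" if i: "i < length F" and u: "u \<in> F ! i" for i u
    proof -
      have "(\<lambda>v. a * v) ` (F ! i) = F ! i"
      proof (rule endo_inj_surj)
        show "finite (F ! i)" by simp
        show "inj_on (\<lambda>v. a * v) (F ! i)" using \<open>a \<noteq> 0\<close> by (simp add: inj_on_def)
        show "(\<lambda>v. a * v) ` (F ! i) \<subseteq> F ! i" using \<open>a \<in> T\<close> i unfolding T_def by blast
      qed
      then obtain v where "v \<in> F ! i" "u = a * v" using u by blast
      then show ?thesis using \<open>a \<noteq> 0\<close> by (simp add: mult.assoc[symmetric])
    qed
    then show ?thesis unfolding T_def by blast
  qed
  have sfT: "sf T" unfolding sf_def by (simp add: T0 T1 Tadd Tmul Tneg Tinv)
  have Tsub: "is_subspace Km T" unfolding is_subspace_def using T0 Tadd Tmul KT by blast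
  have Usub: "is_subspace T (UNIV :: 'a set)" unfolding is_subspace_def by simp
  define e where "e = dim_over Km T"
  define f where "f = dim_over T (UNIV :: 'a set)"
  have cT: "card T = q ^ (m * e)" using dim_card[OF sfK Tsub] cK by (simp add: e_def power_mult)
  have cU: "card (UNIV :: 'a set) = card T ^ f" using dim_card[OF sfT Usub] by (simp add: f_def)
  have "q ^ n = q ^ (m * e * f)" using card cU cT by (simp add: power_mult)
  then have nd: "n = m * e * f" using q2 by (simp add: power_inject_exp)
  define d where "d = m * e"
  have dn: "d dvd n" using nd d_def by simp
  have cTd: "card T = q ^ d" using cT d_def by simp
  have cSd: "card (subfield_of q d :: 'a set) = q ^ d" by (rule card_subfield[OF card q2 n dn])
  have qd0: "q ^ d > 0" using q2 by simp
  have "T \<subseteq> subfield_of q d"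
  proof
    fix y assume y: "y \<in> T"
    show "y \<in> subfield_of q d"
    proof (cases "y = 0")
      case True then show ?thesis using qd0 by (simp add: subfield_of_def)
    next
      case False
      have "y ^ card (T - {0}) = 1"
      proof (rule units_pow)
        show "\<forall>a\<in>T - {0}. \<forall>b\<in>T - {0}. a * b \<in> T - {0}" using Tmul by simp
        show "finite (T - {0})" by simp
        show "0 \<notin> T - {0}" by simp
        show "y \<in> T - {0}" using y False by simp
      qed
      moreover have "card (T - {0}) = q ^ d - 1" using cTd T0 by (simp add: card_Diff_singleton)
      ultimately have "y ^ (q ^ d - 1) = 1" by simp
      moreover have "q ^ d = Suc (q ^ d - 1)" using qd0 by simp
      ultimately have "y ^ (q ^ d) = y" by (metis power_Suc mult_1_right)
      then show ?thesis by (simp add: subfield_of_def)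
    qed
  qed
  then have Teq: "T = subfield_of q d" using cTd cSd by (intro card_subset_eq) auto
  have "is_friend q n d F"
    unfolding is_friend_def
  proof (intro conjI allI impI)
    show "d dvd n" by (rule dn)
    fix i assume i: "i < length F"
    have "is_subspace Km (F ! i)" using fr i by blast
    then have "0 \<in> F ! i \<and> (\<forall>u\<in>F ! i. \<forall>v\<in>F ! i. u + v \<in> F ! i)"
      unfolding is_subspace_def by blast
    moreover have "\<forall>c\<in>T. \<forall>u\<in>F ! i. c * u \<in> F ! i" using i unfolding T_def by blast
    ultimately have "is_subspace T (F ! i)" unfolding is_subspace_def by blast
    then show "is_subspace (subfield_of q d) (F ! i)" using Teq by simp
  qed
  then have "d \<le> m" using bf unfolding is_best_friend_def by blast
  then have "m * e \<le> m * 1" using d_def by simp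
  then have "e \<le> 1" using m1 by simp
  then have "m * e \<le> m" by simp
  then have "q ^ (m * e) \<le> q ^ m" using q2 by (intro power_increasing) auto
  then have "card T \<le> card Km" using cT cK by simp
  moreover have "finite T" by simp
  ultimately have "Km = T" using KT card_seteq by blast
  then have "T = Km" by simp
  moreover have "x \<in> T" using x unfolding T_def by blast
  ultimately show ?thesis unfolding Km_def by simp
qed

lemma sub_K_to_F:
  assumes "is_subspace K W" "L \<subseteq> K"
  shows "is_subspace L W"
  using assms unfolding is_subspace_def by blast

lemma dist_pair:
  fixes U V :: "'a::{finite,field} set"
  assumes p: "prime p" and k: "k > 0" and q: "q = p ^ k"
    and card: "card (UNIV :: 'a set) = q ^ n" and n: "n \<ge> 1" and mn: "m dvd n"
    and U: "is_subspace (subfield_of q m) U" and V: "is_subspace (subfield_of q m) V"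
    and cU: "card U = q ^ (m * a)" and cV: "card V = q ^ (m * a)" and a: "a \<le> n div m"
  shows "\<exists>t. subspace_dist q U V = 2 * m * t \<and> t \<le> a \<and> t \<le> n div m - a \<and> (U \<noteq> V \<longrightarrow> 1 \<le> t)"
proof -
  have q2: "q \<ge> 2" by (rule q_ge2[OF p k q])
  define Km where "Km = (subfield_of q m :: 'a set)"
  define Fq where "Fq = (subfield_of q 1 :: 'a set)"
  have sfK: "sf Km" unfolding Km_def by (rule sf_subfield[OF p k q card])
  have sfF: "sf Fq" unfolding Fq_def by (rule sf_subfield[OF p k q card])
  have cK: "card Km = q ^ m" unfolding Km_def by (rule card_subfield[OF card q2 n mn])
  have cF: "card Fq = q" unfolding Fq_def using card_subfield[OF card q2 n, of 1] by simp
  have FK: "Fq \<subseteq> Km" unfolding Fq_def Km_def using subfield_mono1 by blast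
  have m1: "m \<ge> 1" using mn n by (cases m) auto
  define S where "S = n div m"
  have nS: "n = m * S" using mn S_def by simp
  have dims: "dim_over Fq W = m * dim_over Km W \<and> card W = q ^ (m * dim_over Km W)"
    if W: "is_subspace Km W" for W :: "'a set"
  proof -
    have c1: "card W = q ^ (m * dim_over Km W)"
      using dim_card[OF sfK W] cK by (simp add: power_mult)
    have c2: "card W = q ^ dim_over Fq W"
      using dim_card[OF sfF sub_K_to_F[OF W FK]] cF by simp
    have "dim_over Fq W = m * dim_over Km W" using c1 c2 q2 by (simp add: power_inject_exp)
    then show ?thesis using c1 by simp
  qed
  define W1 where "W1 = set_plus U V"
  define W0 where "W0 = U \<inter> V"
  have UK: "is_subspace Km U" and VK: "is_subspace Km V" using U V by (simp_all add: Km_def)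
  have W1s: "is_subspace Km W1" unfolding W1_def by (rule subspace_plus[OF UK VK])
  have W0s: "is_subspace Km W0" unfolding W0_def by (rule subspace_inter[OF UK VK])
  define b1 where "b1 = dim_over Km W1"
  define b0 where "b0 = dim_over Km W0"
  have d1: "dim_over Fq W1 = m * b1" "card W1 = q ^ (m * b1)" using dims[OF W1s] b1_def by auto
  have d0: "dim_over Fq W0 = m * b0" "card W0 = q ^ (m * b0)" using dims[OF W0s] b0_def by auto
  have "card W1 * card W0 = card U * card V"
    unfolding W1_def W0_def by (rule card_plus_inter[OF sfK UK VK])
  then have "q ^ (m * b1 + m * b0) = q ^ (m * a + m * a)" using d1 d0 cU cV by (simp add: power_add)
  then have "m * b1 + m * b0 = m * a + m * a" using q2 by (simp add: power_inject_exp)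
  then have "m * (b1 + b0) = m * (2 * a)" by (simp add: algebra_simps)
  then have sum: "b1 + b0 = 2 * a" using m1 by simp
  have "card W1 \<le> card (UNIV :: 'a set)" by (rule card_mono) auto
  then have "q ^ (m * b1) \<le> q ^ (m * S)" using d1 card nS by simp
  then have "m * b1 \<le> m * S" using q2 by (simp add: power_le_imp_le_exp)
  then have b1S: "b1 \<le> S" using m1 by simp
  have "card W0 \<le> card U" unfolding W0_def by (rule card_mono) auto
  then have "q ^ (m * b0) \<le> q ^ (m * a)" using d0 cU by simp
  then have "m * b0 \<le> m * a" using q2 by (simp add: power_le_imp_le_exp)
  then have b0a: "b0 \<le> a" using m1 by simp
  define t where "t = a - b0"
  have "subspace_dist q U V = dim_over Fq W1 - dim_over Fq W0"
    unfolding subspace_dist_def Fq_def W1_def W0_def by simp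
  also have "\<dots> = m * b1 - m * b0" using d1 d0 by simp
  also have "\<dots> = m * (b1 - b0)" by (simp add: diff_mult_distrib2)
  also have "b1 - b0 = 2 * t" using sum b0a t_def by simp
  finally have dist: "subspace_dist q U V = 2 * m * t" by simp
  have t1: "t \<le> a" using t_def by simp
  have t2: "t \<le> n div m - a" using sum b1S t_def S_def b0a by simp
  have t3: "U \<noteq> V \<longrightarrow> 1 \<le> t"
  proof
    assume UV: "U \<noteq> V"
    show "1 \<le> t"
    proof (rule ccontr)
      assume "\<not> 1 \<le> t"
      then have "b0 = a" using t_def b0a by simp
      then have "card W0 = card U" using d0 cU by simp
      then have "W0 = U" unfolding W0_def by (intro card_subset_eq) auto
      then have "U \<subseteq> V" unfolding W0_def by blast
      then have "U = V" using cU cV by (intro card_subset_eq) auto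
      then show False using UV by simp
    qed
  qed
  show ?thesis using dist t1 t2 t3 by blast
qed

lemma sf_pow: assumes "sf K" "b \<in> K" shows "b ^ j \<in> K"
  using assms by (induction j) (auto simp: sf_def)

lemma shift_props:
  fixes U :: "'a::{finite,field} set"
  assumes U: "is_subspace K U" and b: "b \<noteq> 0"
  shows "is_subspace K ((\<lambda>u. u * b) ` U) \<and> card ((\<lambda>u. u * b) ` U) = card U"
proof
  have "inj_on (\<lambda>u. u * b) U" using b by (auto simp: inj_on_def)
  then show "card ((\<lambda>u. u * b) ` U) = card U" by (rule card_image)
  show "is_subspace K ((\<lambda>u. u * b) ` U)"
    unfolding is_subspace_def
  proof (intro conjI ballI)
    show "0 \<in> (\<lambda>u. u * b) ` U" using U unfolding is_subspace_def by force
  next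
    fix x y assume "x \<in> (\<lambda>u. u * b) ` U" "y \<in> (\<lambda>u. u * b) ` U"
    then obtain u v where uv: "u \<in> U" "v \<in> U" "x = u * b" "y = v * b" by blast
    then have "u + v \<in> U" using U unfolding is_subspace_def by blast
    moreover have "x + y = (u + v) * b" using uv by (simp add: distrib_right)
    ultimately show "x + y \<in> (\<lambda>u. u * b) ` U" by blast
  next
    fix c x assume c: "c \<in> K" and "x \<in> (\<lambda>u. u * b) ` U"
    then obtain u where u: "u \<in> U" "x = u * b" by blast
    then have "c * u \<in> U" using U c unfolding is_subspace_def by blast
    moreover have "c * x = (c * u) * b" using u by (simp add: mult.assoc)
    ultimately show "c * x \<in> (\<lambda>u. u * b) ` U" by blast
  qed
qed

lemma flag_pair:
  fixes F :: "'a::{finite,field} set list" and sl :: "nat list" and \<beta> :: 'a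
  assumes p: "prime p" and k: "k > 0" and q: "q = p ^ k"
    and card: "card (UNIV :: 'a set) = q ^ n" and n: "n \<ge> 1" and mn: "m dvd n"
    and len: "length F = length sl"
    and fr: "\<forall>i<length F. is_subspace (subfield_of q m) (F ! i)"
    and cF: "\<forall>i<length F. card (F ! i) = q ^ (m * sl ! i)"
    and sb: "\<forall>i<length sl. sl ! i \<le> n div m"
    and beta: "\<beta> \<noteq> 0"
  shows "\<exists>t. flag_dist q (map (\<lambda>U. (\<lambda>u. u * \<beta> ^ j) ` U) F) (map (\<lambda>U. (\<lambda>u. u * \<beta> ^ j') ` U) F)
              = 2 * m * (\<Sum>i<length sl. t i)
           \<and> (\<forall>i<length sl. t i \<le> sl ! i \<and> t i \<le> n div m - sl ! i)
           \<and> (map (\<lambda>U. (\<lambda>u. u * \<beta> ^ j) ` U) F \<noteq> map (\<lambda>U. (\<lambda>u. u * \<beta> ^ j') ` U) F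
               \<longrightarrow> 1 \<le> (\<Sum>i<length sl. t i))"
proof -
  define A where "A i = (\<lambda>u. u * \<beta> ^ j) ` (F ! i)" for i
  define B where "B i = (\<lambda>u. u * \<beta> ^ j') ` (F ! i)" for i
  have bj: "\<beta> ^ j \<noteq> 0" "\<beta> ^ j' \<noteq> 0" using beta by simp_all
  have ex: "\<forall>i\<in>{..<length sl}. \<exists>t. subspace_dist q (A i) (B i) = 2 * m * t \<and> t \<le> sl ! i
              \<and> t \<le> n div m - sl ! i \<and> (A i \<noteq> B i \<longrightarrow> 1 \<le> t)"
  proof
    fix i assume "i \<in> {..<length sl}"
    then have i: "i < length F" using len by simp
    have A: "is_subspace (subfield_of q m) (A i) \<and> card (A i) = card (F ! i)"
      unfolding A_def by (rule shift_props[OF _ bj(1)]) (use fr i in blast)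
    have B: "is_subspace (subfield_of q m) (B i) \<and> card (B i) = card (F ! i)"
      unfolding B_def by (rule shift_props[OF _ bj(2)]) (use fr i in blast)
    show "\<exists>t. subspace_dist q (A i) (B i) = 2 * m * t \<and> t \<le> sl ! i
              \<and> t \<le> n div m - sl ! i \<and> (A i \<noteq> B i \<longrightarrow> 1 \<le> t)"
    proof (rule dist_pair[OF p k q card n mn])
      show "is_subspace (subfield_of q m) (A i)" using A by blast
      show "is_subspace (subfield_of q m) (B i)" using B by blast
      show "card (A i) = q ^ (m * sl ! i)" using A cF i by simp
      show "card (B i) = q ^ (m * sl ! i)" using B cF i by simp
      show "sl ! i \<le> n div m" using sb i len by simp
    qed
  qed
  then obtain t where t: "\<forall>i\<in>{..<length sl}. subspace_dist q (A i) (B i) = 2 * m * t i \<and> t i \<le> sl ! i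
              \<and> t i \<le> n div m - sl ! i \<and> (A i \<noteq> B i \<longrightarrow> 1 \<le> t i)"
    by (rule bchoice[THEN exE]) blast
  have "flag_dist q (map (\<lambda>U. (\<lambda>u. u * \<beta> ^ j) ` U) F) (map (\<lambda>U. (\<lambda>u. u * \<beta> ^ j') ` U) F)
        = (\<Sum>i<length sl. subspace_dist q (A i) (B i))"
    unfolding flag_dist_def A_def B_def using len by simp
  also have "\<dots> = (\<Sum>i<length sl. 2 * m * t i)" using t by (intro sum.cong) auto
  also have "\<dots> = 2 * m * (\<Sum>i<length sl. t i)" by (simp add: sum_distrib_left)
  finally have fd: "flag_dist q (map (\<lambda>U. (\<lambda>u. u * \<beta> ^ j) ` U) F) (map (\<lambda>U. (\<lambda>u. u * \<beta> ^ j') ` U) F)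
        = 2 * m * (\<Sum>i<length sl. t i)" .
  have bnd: "\<forall>i<length sl. t i \<le> sl ! i \<and> t i \<le> n div m - sl ! i" using t by auto
  have ne: "1 \<le> (\<Sum>i<length sl. t i)"
    if neq: "map (\<lambda>U. (\<lambda>u. u * \<beta> ^ j) ` U) F \<noteq> map (\<lambda>U. (\<lambda>u. u * \<beta> ^ j') ` U) F"
  proof -
    have "\<exists>i<length F. A i \<noteq> B i"
    proof (rule ccontr)
      assume "\<not> (\<exists>i<length F. A i \<noteq> B i)"
      then have "\<forall>i<length F. A i = B i" by blast
      then have "map (\<lambda>U. (\<lambda>u. u * \<beta> ^ j) ` U) F = map (\<lambda>U. (\<lambda>u. u * \<beta> ^ j') ` U) F"
        unfolding A_def B_def by (intro nth_equalityI) auto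
      then show False using neq by simp
    qed
    then obtain i where i: "i < length sl" "A i \<noteq> B i" using len by auto
    then have "1 \<le> t i" using t by auto
    also have "t i \<le> (\<Sum>i<length sl. t i)" using i by (intro member_le_sum) auto
    finally show ?thesis .
  qed
  show ?thesis using fd bnd ne by blast
qed

theorem proposition4p4:
  fixes q n m :: nat and sl :: "nat list" and F :: "('a::{finite,field}) set list" and \<beta> :: 'a
  assumes q: "prime_power q"
    and card: "card (UNIV :: 'a set) = q ^ n"
    and n: "n \<ge> 1"
    and mn: "m dvd n"
    and s_bounds: "\<forall>i < length sl. 1 \<le> sl ! i \<and> sl ! i < n div m"
    and s_sorted: "sorted_wrt (<) sl"
    and flag: "is_flag q (map (\<lambda>x. m * x) sl) F"
    and bf: "is_best_friend q n m F"
    and beta: "\<beta> \<noteq> 0"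
  shows "(min_flag_dist q (orbit \<beta> F) = 0 \<longleftrightarrow> \<beta> \<in> subfield_of q m)
       \<and> (\<beta> \<notin> subfield_of q m \<longrightarrow>
           2 * m dvd min_flag_dist q (orbit \<beta> F)
         \<and> 2 * m \<le> min_flag_dist q (orbit \<beta> F)
         \<and> min_flag_dist q (orbit \<beta> F) \<le>
             2 * m * (\<Sum>i < length sl. if sl ! i \<le> (n div m) div 2 then sl ! i else n div m - sl ! i))"
proof -
  obtain p k where p: "prime p" and k: "k > 0" and qp: "q = p ^ k"
    using q unfolding prime_power_def by blast
  have q2: "q \<ge> 2" by (rule q_ge2[OF p k qp])
  have m1: "m \<ge> 1" using mn n by (cases m) auto
  define Km where "Km = (subfield_of q m :: 'a set)"
  define Fq where "Fq = (subfield_of q 1 :: 'a set)"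
  have sfK: "sf Km" unfolding Km_def by (rule sf_subfield[OF p k qp card])
  have sfF: "sf Fq" unfolding Fq_def by (rule sf_subfield[OF p k qp card])
  have cF: "card Fq = q" unfolding Fq_def using card_subfield[OF card q2 n, of 1] by simp
  have len: "length F = length sl" using flag unfolding is_flag_def by simp
  have fr: "\<forall>i<length F. is_subspace (subfield_of q m) (F ! i)"
    using bf unfolding is_best_friend_def is_friend_def by blast
  have cFi: "\<forall>i<length F. card (F ! i) = q ^ (m * sl ! i)"
  proof (intro allI impI)
    fix i assume i: "i < length F"
    have s1: "is_subspace Fq (F ! i)" and s2: "dim_over Fq (F ! i) = m * sl ! i"
      using flag i len unfolding is_flag_def Fq_def by auto
    have "card (F ! i) = card Fq ^ dim_over Fq (F ! i)" by (rule dim_card[OF sfF s1]) simp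
    then show "card (F ! i) = q ^ (m * sl ! i)" using s2 cF by simp
  qed
  have sb: "\<forall>i<length sl. sl ! i \<le> n div m" using s_bounds by (simp add: less_imp_le)
  define G where "G j = map (\<lambda>U. (\<lambda>u. u * \<beta> ^ j) ` U) F" for j
  have pair: "\<exists>t. flag_dist q (G j) (G j') = 2 * m * (\<Sum>i<length sl. t i)
           \<and> (\<forall>i<length sl. t i \<le> sl ! i \<and> t i \<le> n div m - sl ! i)
           \<and> (G j \<noteq> G j' \<longrightarrow> 1 \<le> (\<Sum>i<length sl. t i))" for j j'
    unfolding G_def by (rule flag_pair[OF p k qp card n mn len fr cFi sb beta])
  define ord where "ord = mult_order \<beta>"
  have O: "orbit \<beta> F = G ` {..ord - 1}"
    unfolding orbit_def G_def ord_def by auto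
  have G0: "G 0 = F" unfolding G_def by (simp add: map_idI)
  have F_in: "F \<in> orbit \<beta> F" using O G0 by force
  show ?thesis
  proof (cases "\<beta> \<in> Km")
    case True
    have "G j = F" for j
    proof -
      have bj: "\<beta> ^ j \<in> Km" by (rule sf_pow[OF sfK True])
      have "(\<lambda>u. u * \<beta> ^ j) ` (F ! i) = F ! i" if i: "i < length F" for i
      proof (rule card_subset_eq)
        show "finite (F ! i)" by simp
        have "is_subspace Km (F ! i)" using fr i Km_def by simp
        then show "(\<lambda>u. u * \<beta> ^ j) ` (F ! i) \<subseteq> F ! i"
          using bj unfolding is_subspace_def by (auto simp: mult.commute)
        have "\<beta> ^ j \<noteq> 0" using beta by simp
        then show "card ((\<lambda>u. u * \<beta> ^ j) ` (F ! i)) = card (F ! i)"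
          by (intro card_image) (auto simp: inj_on_def)
      qed
      then show ?thesis unfolding G_def by (intro nth_equalityI) auto
    qed
    then have "orbit \<beta> F = {F}" using O F_in by auto
    then have "min_flag_dist q (orbit \<beta> F) = 0" unfolding min_flag_dist_def by auto
    then show ?thesis using True Km_def by simp
  next
    case False
    have bn: "\<beta> \<notin> subfield_of q m" using False Km_def by simp
    have ex: "\<exists>k. k > 0 \<and> \<beta> ^ k = 1"
    proof (intro exI conjI)
      show "\<beta> ^ (card (UNIV :: 'a set) - 1) = 1" by (rule all_pow[OF beta])
      have "q ^ n \<ge> 2" using q2 n by (metis le_trans power_increasing power_one_right order.refl less_imp_le_nat nat_less_le one_less_numeral_iff semiring_norm(76) le_less_trans)
      then show "card (UNIV :: 'a set) - 1 > 0" using card by simp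
    qed
    have ordp: "ord > 0 \<and> \<beta> ^ ord = 1"
      unfolding ord_def mult_order_def by (rule LeastI_ex[OF ex])
    have "ord \<noteq> 1"
    proof
      assume "ord = 1"
      then have "\<beta> = 1" using ordp by simp
      moreover have "(1::'a) \<in> Km" using sfK by (simp add: sf_def)
      ultimately show False using False by simp
    qed
    then have "1 \<in> {..ord - 1}" using ordp by auto
    then have G1_in: "G 1 \<in> orbit \<beta> F" using O by blast
    have G1ne: "G 1 \<noteq> F"
    proof
      assume e: "G 1 = F"
      have "\<forall>i<length F. \<forall>u\<in>F ! i. \<beta> * u \<in> F ! i"
      proof (intro allI impI ballI)
        fix i u assume i: "i < length F" and u: "u \<in> F ! i"
        have "G 1 ! i = F ! i" using e by simp
        then have "(\<lambda>u. u * \<beta>) ` (F ! i) = F ! i" using i unfolding G_def by simp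
        moreover have "u * \<beta> \<in> (\<lambda>u. u * \<beta>) ` (F ! i)" using u by (rule imageI)
        ultimately have "u * \<beta> \<in> F ! i" by simp
        then show "\<beta> * u \<in> F ! i" by (simp add: mult.commute)
      qed
      then have "\<beta> \<in> subfield_of q m" by (rule stab_in_subfield[OF p k qp card n mn bf])
      then show False using bn by simp
    qed
    define D where "D = {flag_dist q a b | a b. a \<in> orbit \<beta> F \<and> b \<in> orbit \<beta> F \<and> a \<noteq> b}"
    have exab: "\<exists>a\<in>orbit \<beta> F. \<exists>b\<in>orbit \<beta> F. a \<noteq> b" using F_in G1_in G1ne by blast
    have mfd: "min_flag_dist q (orbit \<beta> F) = Min D"
      unfolding min_flag_dist_def D_def using exab by simp
    have finO: "finite (orbit \<beta> F)" using O by simp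
    have "D \<subseteq> (\<lambda>(a, b). flag_dist q a b) ` (orbit \<beta> F \<times> orbit \<beta> F)"
      unfolding D_def by auto
    moreover have "finite ((\<lambda>(a, b). flag_dist q a b) ` (orbit \<beta> F \<times> orbit \<beta> F))"
      using finO by simp
    ultimately have finD: "finite D" by (rule finite_subset)
    have FG1: "flag_dist q (G 0) (G 1) \<in> D" unfolding D_def G0
      using F_in G1_in G1ne by blast
    then have neD: "D \<noteq> {}" by blast
    have "Min D \<in> D" using finD neD by (rule Min_in)
    then obtain a b where ab: "a \<in> orbit \<beta> F" "b \<in> orbit \<beta> F" "a \<noteq> b" "Min D = flag_dist q a b"
      unfolding D_def by blast
    then obtain j j' where "a = G j" "b = G j'" using O by auto
    then obtain t where t: "Min D = 2 * m * (\<Sum>i<length sl. t i)" "1 \<le> (\<Sum>i<length sl. t i)"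
      using pair[of j j'] ab by auto
    have dvd: "2 * m dvd Min D" using t by simp
    have low: "2 * m \<le> Min D" using t by simp
    obtain t' where t': "flag_dist q (G 0) (G 1) = 2 * m * (\<Sum>i<length sl. t' i)"
      "\<forall>i<length sl. t' i \<le> sl ! i \<and> t' i \<le> n div m - sl ! i"
      using pair[of 0 1] by blast
    have "Min D \<le> flag_dist q (G 0) (G 1)" using finD FG1 by (rule Min_le)
    also have "\<dots> = 2 * m * (\<Sum>i<length sl. t' i)" by (rule t'(1))
    also have "\<dots> \<le> 2 * m * (\<Sum>i<length sl. if sl ! i \<le> (n div m) div 2 then sl ! i else n div m - sl ! i)"
    proof (intro mult_le_mono2 sum_mono)
      fix i assume "i \<in> {..<length sl}"
      then show "t' i \<le> (if sl ! i \<le> (n div m) div 2 then sl ! i else n div m - sl ! i)"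
        using t'(2) by auto
    qed
    finally have up: "Min D \<le> 2 * m * (\<Sum>i<length sl. if sl ! i \<le> (n div m) div 2 then sl ! i else n div m - sl ! i)" .
    have "Min D \<noteq> 0" using low m1 by simp
    then show ?thesis using mfd dvd low up bn by simp
  qed
qed

end
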